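(* Let $B$ be a finite set (of "bath spins"), and introduce commuting indeterminates $b_{i,j}=b_{j,i}$ for distinct $i,j\in B$. For every subset $\mathcal S\subseteq B$ let $L_{\mathcal S}$ be a formal power series in the variables $\{b_{i,j}: i,j\in\mathcal S,\ i\neq j\}$ (with complex coefficients, which may depend on additional parameters such as a time $t$) whose constant term is nonzero. Define $\tilde L_{\mathcal S}$ recursively for all $\mathcal S\subseteq B$ by $$\tilde L_{\mathcal S}=L_{\mathcal S}\Big/\prod_{\mathcal C\subsetneq \mathcal S}\tilde L_{\mathcal C},$$ so that $L_{\mathcal S}=\prod_{\mathcal C\subseteq\mathcal S}\tilde L_{\mathcal C}$. Suppose the family $(L_{\mathcal S})$ is factorable under disconnected interactions, i.e. for every $\mathcal S\subseteq B$ and all subsets $\mathcal X,\mathcal Y\subseteq\mathcal S$ with $\mathcal X\cup\mathcal Y=\mathcal S$ and $\mathcal X\cap\mathcal Y=\emptyset$, setting $b_{i,j}=0$ for all $i\in\mathcal X$, $j\in\mathcal Y$ in $L_{\mathcal S}$ yields $L_{\mathcal X}L_{\mathcal Y}$. Then for every $\mathcal C\subseteq B$, every non-constant monomial appearing (with nonzero coefficient) in the power series $\tilde L_{\mathcal C}$ has the following property: the graph with vertex set $\mathcal C$ and with an edge $\{i,j\}$ for each variable $b_{i,j}$ occurring in that monomial is connected. Equivalently, no non-constant term of $\tilde L_{\mathcal C}$ can be factored into parts involving disjoint non-empty sets of spins of $\mathcal C$.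
   Context: The quotient and products are taken in the ring of formal power series; they are well defined because every $L_{\mathcal S}$, and hence every $\tilde L_{\mathcal S}$, has nonzero constant term and is thus invertible. Since $L_{\mathcal S}$ involves only variables indexed by pairs in $\mathcal S$, setting the cross variables to zero gives a series in variables indexed within $\mathcal X$ and within $\mathcal Y$, which is compared with the product $L_{\mathcal X}L_{\mathcal Y}$. *)

theory Defs
  imports Complex_Main "HOL-Library.Poly_Mapping" "HOL-Library.FuncSet"
begin

text \<open>The indeterminate b_{i,j} is
  represented by the two-element set {i,j}; a monomial is a finitely supported
  exponent vector (a poly_mapping into nat); a series is its coefficient function.\<close>

type_synonym 'a mono = "'a set \<Rightarrow>\<^sub>0 nat"
type_synonym 'a mfps = "'a mono \<Rightarrow> complex"

definition pair_vars :: "'a set \<Rightarrow> 'a set set" where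
  "pair_vars S = {{i, j} | i j. i \<in> S \<and> j \<in> S \<and> i \<noteq> j}"

definition mfps_mult :: "'a mfps \<Rightarrow> 'a mfps \<Rightarrow> 'a mfps" where
  "mfps_mult f g m = (\<Sum>(p, q) \<in> {(p, q). p + q = m}. f p * g q)"

definition mfps_prod :: "'i set \<Rightarrow> ('i \<Rightarrow> 'a mfps) \<Rightarrow> 'a mfps" where
  "mfps_prod I F m =
     (\<Sum>h \<in> {h. h \<in> I \<rightarrow>\<^sub>E UNIV \<and> (\<Sum>i\<in>I. h i) = m}. \<Prod>i\<in>I. F i (h i))"

definition kill_cross :: "'a set \<Rightarrow> 'a set \<Rightarrow> 'a mfps \<Rightarrow> 'a mfps" where
  "kill_cross X Y f m = (if \<exists>i\<in>X. \<exists>j\<in>Y. {i, j} \<in> Poly_Mapping.keys m then 0 else f m)"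

definition graph_connected :: "'a set \<Rightarrow> 'a set set \<Rightarrow> bool" where
  "graph_connected C E \<longleftrightarrow>
     (\<forall>x\<in>C. \<forall>y\<in>C. (\<lambda>u v. u \<in> C \<and> v \<in> C \<and> u \<noteq> v \<and> {u, v} \<in> E)\<^sup>*\<^sup>* x y)"

end

theory Submission
  imports Defs
begin

definition cst :: "complex \<Rightarrow> 'a mfps" where "cst c m = (if m = 0 then c else 0)"
definition filt :: "('a mono \<Rightarrow> bool) \<Rightarrow> 'a mfps \<Rightarrow> 'a mfps" where
  "filt Q f m = (if Q m then f m else 0)"
definition deg :: "'a mono \<Rightarrow> nat" where "deg m = (\<Sum>k\<in>Poly_Mapping.keys m. Poly_Mapping.lookup m k)"

lemma keys_add_nat: "Poly_Mapping.keys (p + q :: 'a mono) = Poly_Mapping.keys p \<union> Poly_Mapping.keys q"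
  by (auto simp: in_keys_iff lookup_add)

lemma deg_add: "deg (p + q) = deg p + deg q"
  unfolding deg_def by (rule setsum_keys_plus_distrib) auto

lemma deg_zero: "deg m = 0 \<Longrightarrow> m = 0"
  unfolding deg_def by (simp add: in_keys_iff) (metis lookup_zero poly_mapping_eqI)

lemma fin_dec: "finite {p. \<exists>q. p + q = (m :: 'a mono)}"
proof -
  let ?K = "Poly_Mapping.keys m"
  let ?g = "\<lambda>p :: 'a mono. restrict (Poly_Mapping.lookup p) ?K"
  have sub: "?g ` {p. \<exists>q. p + q = m} \<subseteq> (\<Pi>\<^sub>E k\<in>?K. {0..Poly_Mapping.lookup m k})"
    by (auto simp: lookup_add)
  have inj: "inj_on ?g {p. \<exists>q. p + q = m}"
  proof (rule inj_onI)
    fix p1 p2 assume a: "p1 \<in> {p. \<exists>q. p + q = m}" "p2 \<in> {p. \<exists>q. p + q = m}" "?g p1 = ?g p2"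
    show "p1 = p2"
    proof (rule poly_mapping_eqI)
      fix k
      show "Poly_Mapping.lookup p1 k = Poly_Mapping.lookup p2 k"
      proof (cases "k \<in> ?K")
        case True then show ?thesis using a(3) by (metis restrict_apply')
      next
        case False
        then have "Poly_Mapping.lookup m k = 0" by (simp add: in_keys_iff)
        moreover obtain q1 q2 where "p1 + q1 = m" "p2 + q2 = m" using a(1,2) by blast
        ultimately show ?thesis by (metis add_is_0 lookup_add)
      qed
    qed
  qed
  have "finite (?g ` {p. \<exists>q. p + q = m})"
    by (rule finite_subset[OF sub]) (auto intro!: finite_PiE)
  then show ?thesis using inj finite_imageD by blast
qed

lemma fin_D: "finite {(p, q). p + q = (m :: 'a mono)}"
proof -
  have "{(p, q). p + q = m} \<subseteq> {p. \<exists>q. p + q = m} \<times> {q. \<exists>p. p + q = m}"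
    by auto
  moreover have "{q. \<exists>p. p + q = m} = {p. \<exists>q. p + q = m}"
    by (auto simp: add.commute)
  ultimately have "{(p, q). p + q = m} \<subseteq> {p. \<exists>q. p + q = m} \<times> {p. \<exists>q. p + q = m}" by simp
  then show ?thesis by (rule finite_subset) (intro finite_SigmaI fin_dec)
qed

lemma fin_H: assumes "finite I"
  shows "finite {h. h \<in> I \<rightarrow>\<^sub>E UNIV \<and> (\<Sum>i\<in>I. h i) = (m :: 'a mono)}"
proof -
  have "{h. h \<in> I \<rightarrow>\<^sub>E UNIV \<and> (\<Sum>i\<in>I. h i) = m} \<subseteq> (\<Pi>\<^sub>E i\<in>I. {p. \<exists>q. p + q = m})"
  proof
    fix h assume h: "h \<in> {h. h \<in> I \<rightarrow>\<^sub>E UNIV \<and> (\<Sum>i\<in>I. h i) = m}"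
    show "h \<in> (\<Pi>\<^sub>E i\<in>I. {p. \<exists>q. p + q = m})"
    proof (rule PiE_I)
      fix i assume "i \<in> I"
      then have "h i + (\<Sum>j\<in>I - {i}. h j) = m" using h assms by (simp add: sum.remove)
      then show "h i \<in> {p. \<exists>q. p + q = m}" by blast
    next
      fix i assume "i \<notin> I" then show "h i = undefined" using h by auto
    qed
  qed
  then show ?thesis by (rule finite_subset) (rule finite_PiE[OF assms fin_dec])
qed


lemma plus_eq_zero: "p + q = (0 :: 'a mono) \<longleftrightarrow> p = 0 \<and> q = 0"
proof
  assume a: "p + q = 0"
  have "\<And>k. Poly_Mapping.lookup p k = 0 \<and> Poly_Mapping.lookup q k = 0"
    using arg_cong[OF a, of "\<lambda>x. Poly_Mapping.lookup x k" for k] by (simp add: lookup_add)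
  then show "p = 0 \<and> q = 0" by (metis lookup_zero poly_mapping_eqI)
qed simp

lemma D_zero: "{(p, q). p + q = (0 :: 'a mono)} = {(0, 0)}"
  by (auto simp: plus_eq_zero)

lemma mult_0: "mfps_mult f g 0 = f 0 * g 0"
  by (simp add: mfps_mult_def D_zero)

lemma mult_cst_left: "mfps_mult (cst c) f = (\<lambda>m. c * f m)"
proof
  fix m
  have "mfps_mult (cst c) f m = (\<Sum>x\<in>{(p, q). p + q = m}. cst c (fst x) * f (snd x))"
    unfolding mfps_mult_def by (simp add: case_prod_beta)
  also have "\<dots> = c * f m + (\<Sum>x\<in>{(p, q). p + q = m} - {(0, m)}. cst c (fst x) * f (snd x))"
    using sum.remove[OF fin_D, of "(0, m)" m "\<lambda>x. cst c (fst x) * f (snd x)"] by (simp add: cst_def)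
  also have "(\<Sum>x\<in>{(p, q). p + q = m} - {(0, m)}. cst c (fst x) * f (snd x)) = 0"
    by (rule sum.neutral) (auto simp: cst_def)
  finally show "mfps_mult (cst c) f m = c * f m" by simp
qed

lemma mult_smult_right: "mfps_mult f (\<lambda>m. c * g m) = (\<lambda>m. c * mfps_mult f g m)"
  unfolding mfps_mult_def by (simp add: sum_distrib_left case_prod_beta mult.left_commute)

lemma mult_cong: "mfps_mult f g = mfps_mult f' g' \<Longrightarrow> mfps_mult f g m = mfps_mult f' g' m"
  by simp

lemma mult_split: "mfps_mult f h m = f m * h 0 + (\<Sum>x\<in>{(p, q). p + q = m} - {(m, 0)}. f (fst x) * h (snd x))"
proof -
  have "mfps_mult f h m = (\<Sum>x\<in>{(p, q). p + q = m}. f (fst x) * h (snd x))"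
    unfolding mfps_mult_def by (simp add: case_prod_beta)
  also have "\<dots> = f (fst (m, 0)) * h (snd (m, 0)) + (\<Sum>x\<in>{(p, q). p + q = m} - {(m, 0)}. f (fst x) * h (snd x))"
    using sum.remove[OF fin_D, of "(m, 0)" m "\<lambda>x. f (fst x) * h (snd x)"] by simp
  finally show ?thesis by simp
qed

lemma cancel:
  assumes eq: "mfps_mult f h = mfps_mult g h" and h0: "h 0 \<noteq> 0"
  shows "f = g"
proof
  fix m
  show "f m = g m"
  proof (induction "deg m" arbitrary: m rule: less_induct)
    case less
    have "(\<Sum>x\<in>{(p, q). p + q = m} - {(m, 0)}. f (fst x) * h (snd x)) =
          (\<Sum>x\<in>{(p, q). p + q = m} - {(m, 0)}. g (fst x) * h (snd x))"
    proof (rule sum.cong)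
      fix x assume x: "x \<in> {(p, q). p + q = m} - {(m, 0)}"
      then obtain p q where pq0: "x = (p, q)" "p + q = m" by auto
      with x have "q \<noteq> 0" by auto
      note pq = pq0 this
      then have "deg q \<noteq> 0" using deg_zero by blast
      then have "deg p < deg m" using pq deg_add[of p q] by simp
      then show "f (fst x) * h (snd x) = g (fst x) * h (snd x)" using less pq by simp
    qed simp
    moreover have "mfps_mult f h m = mfps_mult g h m" using eq by simp
    ultimately have "f m * h 0 = g m * h 0" by (simp add: mult_split)
    then show ?case using h0 by simp
  qed
qed

lemma P_cong: "(\<And>i. i \<in> I \<Longrightarrow> F i = G i) \<Longrightarrow> mfps_prod I F = mfps_prod I G"
  unfolding mfps_prod_def by (intro ext sum.cong refl prod.cong) auto

lemma P_empty: "mfps_prod {} F = cst 1"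
proof
  fix m :: "'a mono"
  have "{h. h \<in> {} \<rightarrow>\<^sub>E (UNIV :: 'a mono set) \<and> (\<Sum>i\<in>{}. h i) = m} = (if m = 0 then {\<lambda>_. undefined} else {})"
    by auto
  then show "mfps_prod {} F m = cst 1 m" by (simp add: mfps_prod_def cst_def)
qed

lemma P_single: "mfps_prod {a} F = F a"
proof
  fix m :: "'a mono"
  have "{h. h \<in> {a} \<rightarrow>\<^sub>E (UNIV :: 'a mono set) \<and> (\<Sum>i\<in>{a}. h i) = m} = {(\<lambda>i. if i = a then m else undefined)}"
    by (auto simp: PiE_def extensional_def)
  then show "mfps_prod {a} F m = F a m" by (simp add: mfps_prod_def)
qed


definition HH :: "'i set \<Rightarrow> 'a mono \<Rightarrow> ('i \<Rightarrow> 'a mono) set" where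
  "HH I m = {h. h \<in> I \<rightarrow>\<^sub>E UNIV \<and> (\<Sum>i\<in>I. h i) = m}"

lemma P_HH: "mfps_prod I F m = (\<Sum>h\<in>HH I m. \<Prod>i\<in>I. F i (h i))"
  by (simp add: mfps_prod_def HH_def)

lemma P_union:
  fixes F :: "'i \<Rightarrow> 'a mfps"
  assumes fA: "finite A" and fB: "finite B" and dis: "A \<inter> B = {}"
  shows "mfps_prod (A \<union> B) F = mfps_mult (mfps_prod A F) (mfps_prod B F)"
proof
  fix m :: "'a mono"
  let ?S = "Sigma {(p, q). p + q = m} (\<lambda>x. HH A (fst x) \<times> HH B (snd x))"
  let ?g = "\<lambda>z. (\<Prod>i\<in>A. F i (fst (snd z) i)) * (\<Prod>i\<in>B. F i (snd (snd z) i))"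
  have "mfps_mult (mfps_prod A F) (mfps_prod B F) m =
     (\<Sum>x\<in>{(p, q). p + q = m}. (\<Sum>h1\<in>HH A (fst x). \<Prod>i\<in>A. F i (h1 i)) * (\<Sum>h2\<in>HH B (snd x). \<Prod>i\<in>B. F i (h2 i)))"
    by (simp add: mfps_mult_def P_HH case_prod_beta)
  also have "\<dots> = (\<Sum>x\<in>{(p, q). p + q = m}. \<Sum>y\<in>HH A (fst x) \<times> HH B (snd x). (\<Prod>i\<in>A. F i (fst y i)) * (\<Prod>i\<in>B. F i (snd y i)))"
    by (simp add: sum_product sum.cartesian_product case_prod_beta)
  also have "\<dots> = sum ?g ?S"
    by (subst sum.Sigma) (auto simp: fin_D fin_H HH_def fA fB case_prod_beta)
  also have "\<dots> = (\<Sum>h\<in>HH (A \<union> B) m. \<Prod>i\<in>A \<union> B. F i (h i))"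
  proof (rule sum.reindex_bij_witness[where j = "\<lambda>z. (\<lambda>i. if i \<in> A then fst (snd z) i else snd (snd z) i)"
         and i = "\<lambda>h. ((sum h A, sum h B), (restrict h A, restrict h B))"])
    fix z assume z: "z \<in> ?S"
    then obtain p q h1 h2 where zz: "z = ((p, q), (h1, h2))" "p + q = m" "h1 \<in> HH A p" "h2 \<in> HH B q"
      by auto
    let ?h = "\<lambda>i. if i \<in> A then h1 i else h2 i"
    have jz: "(\<lambda>i. if i \<in> A then fst (snd z) i else snd (snd z) i) = ?h" unfolding zz(1) fst_conv snd_conv by (rule refl)
    have e1: "sum ?h A = p" using zz by (simp add: HH_def)
    have e2: "sum ?h B = q" using zz dis by (auto simp: HH_def intro!: sum.cong)
    have r1: "restrict ?h A = h1" using zz by (auto simp: HH_def PiE_def extensional_def)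
    have r2: "restrict ?h B = h2"
    proof
      fix i show "restrict ?h B i = h2 i"
        using zz dis by (cases "i \<in> B") (auto simp: HH_def PiE_def extensional_def)
    qed
    show "((sum (\<lambda>i. if i \<in> A then fst (snd z) i else snd (snd z) i) A,
           sum (\<lambda>i. if i \<in> A then fst (snd z) i else snd (snd z) i) B),
          (restrict (\<lambda>i. if i \<in> A then fst (snd z) i else snd (snd z) i) A,
           restrict (\<lambda>i. if i \<in> A then fst (snd z) i else snd (snd z) i) B)) = z"
      unfolding jz using zz e1 e2 r1 r2 by simp
    have "sum ?h (A \<union> B) = sum ?h A + sum ?h B" by (rule sum.union_disjoint) (use fA fB dis in auto)
    then have "?h \<in> HH (A \<union> B) m"
      using zz e1 e2 by (auto simp: HH_def PiE_def extensional_def)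
    then show "(\<lambda>i. if i \<in> A then fst (snd z) i else snd (snd z) i) \<in> HH (A \<union> B) m"
      unfolding jz .
    have "(\<Prod>i\<in>A \<union> B. F i (?h i)) = (\<Prod>i\<in>A. F i (?h i)) * (\<Prod>i\<in>B. F i (?h i))"
      by (rule prod.union_disjoint) (use fA fB dis in auto)
    also have "(\<Prod>i\<in>B. F i (?h i)) = (\<Prod>i\<in>B. F i (h2 i))" using dis by (auto intro!: prod.cong)
    finally have "(\<Prod>i\<in>A \<union> B. F i (?h i)) = ?g z" using zz by simp
    moreover have jz': "\<And>i. (if i \<in> A then fst (snd z) i else snd (snd z) i) = ?h i"
      using jz by metis
    ultimately show "(\<Prod>i\<in>A \<union> B. F i ((\<lambda>i. if i \<in> A then fst (snd z) i else snd (snd z) i) i)) = ?g z"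
      by (simp only: jz')
  next
    fix h assume h: "h \<in> HH (A \<union> B) m"
    show "(\<lambda>i. if i \<in> A then fst (snd ((sum h A, sum h B), restrict h A, restrict h B)) i
               else snd (snd ((sum h A, sum h B), restrict h A, restrict h B)) i) = h"
      using h by (auto simp: HH_def PiE_def extensional_def)
    have "sum h (A \<union> B) = sum h A + sum h B" by (rule sum.union_disjoint) (use fA fB dis in auto)
    then show "((sum h A, sum h B), restrict h A, restrict h B) \<in> ?S"
      using h by (auto simp: HH_def intro!: sum.cong)
  qed
  finally show "mfps_prod (A \<union> B) F m = mfps_mult (mfps_prod A F) (mfps_prod B F) m"
    by (simp add: P_HH)
qed


lemma P_insert:
  assumes "finite I" "a \<notin> I"
  shows "mfps_prod (insert a I) F = mfps_mult (F a) (mfps_prod I F)"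
  using P_union[of "{a}" I F] assms by (simp add: P_single)

lemma P_0: "finite I \<Longrightarrow> mfps_prod I F 0 = (\<Prod>i\<in>I. F i 0)"
proof (induction I rule: finite_induct)
  case empty then show ?case by (simp add: P_empty cst_def)
next
  case (insert a I) then show ?case by (simp add: P_insert mult_0)
qed

lemma filt_mult:
  assumes hQ: "\<And>p q. Q (p + q) \<longleftrightarrow> Q p \<and> Q q"
  shows "filt Q (mfps_mult f g) = mfps_mult (filt Q f) (filt Q g)"
proof
  fix m
  show "filt Q (mfps_mult f g) m = mfps_mult (filt Q f) (filt Q g) m"
  proof (cases "Q m")
    case True
    then show ?thesis unfolding filt_def mfps_mult_def using hQ
      by (auto intro!: sum.cong)
  next
    case False
    then have "mfps_mult (filt Q f) (filt Q g) m = 0" unfolding mfps_mult_def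
      by (intro sum.neutral) (auto simp: filt_def hQ)
    then show ?thesis using False by (simp add: filt_def)
  qed
qed

lemma filt_P:
  assumes hQ: "\<And>p q. Q (p + q) \<longleftrightarrow> Q p \<and> Q q" and Q0: "Q 0" and fin: "finite I"
  shows "filt Q (mfps_prod I F) = mfps_prod I (\<lambda>i. filt Q (F i))"
  using fin
proof (induction I rule: finite_induct)
  case empty
  show ?case by (auto simp: P_empty filt_def cst_def Q0)
next
  case (insert a I) then show ?case by (simp add: P_insert filt_mult[OF hQ])
qed

lemma P_cst:
  assumes "finite I" "\<And>i. i \<in> I \<Longrightarrow> F i = cst (c i)"
  shows "mfps_prod I F = cst (\<Prod>i\<in>I. c i)"
  using assms
proof (induction I rule: finite_induct)
  case empty then show ?case by (simp add: P_empty)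
next
  case (insert a I)
  then have "mfps_prod (insert a I) F = mfps_mult (cst (c a)) (cst (\<Prod>i\<in>I. c i))"
    by (simp add: P_insert)
  also have "\<dots> = cst (c a * (\<Prod>i\<in>I. c i))" by (auto simp: mult_cst_left cst_def)
  finally show ?case using insert by simp
qed

lemma pair_vars_mono: "D \<subseteq> C \<Longrightarrow> pair_vars D \<subseteq> pair_vars C"
  unfolding pair_vars_def by blast

lemma pair_vars_empty: "pair_vars {} = {}"
  unfolding pair_vars_def by blast

lemma cross_step:
  assumes "r\<^sup>*\<^sup>* u v" "P u" "\<not> P v"
  shows "\<exists>a b. r a b \<and> P a \<and> \<not> P b"
  using assms by (induction rule: rtranclp_induct) auto


theorem lemma1:
  fixes B :: "'a set"
    and L :: "'a set \<Rightarrow> 'a mfps"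
    and Lt :: "'a set \<Rightarrow> 'a mfps"
  assumes "finite B"
    and vars: "\<And>S m. S \<subseteq> B \<Longrightarrow> L S m \<noteq> 0 \<Longrightarrow> Poly_Mapping.keys m \<subseteq> pair_vars S"
    and const: "\<And>S. S \<subseteq> B \<Longrightarrow> L S 0 \<noteq> 0"
    and tilde: "\<And>S. S \<subseteq> B \<Longrightarrow> L S = mfps_prod (Pow S) Lt"
    and factor: "\<And>S X Y. S \<subseteq> B \<Longrightarrow> X \<union> Y = S \<Longrightarrow> X \<inter> Y = {} \<Longrightarrow>
                   kill_cross X Y (L S) = mfps_mult (L X) (L Y)"
  shows "\<forall>C. C \<subseteq> B \<longrightarrow> (\<forall>m. m \<noteq> 0 \<and> Lt C m \<noteq> 0 \<longrightarrow>
           Poly_Mapping.keys m \<subseteq> pair_vars C \<and> graph_connected C (Poly_Mapping.keys m))"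
proof -
  have finC: "finite C" if "C \<subseteq> B" for C using that \<open>finite B\<close> finite_subset by blast
  have lt0: "Lt C 0 \<noteq> 0" if "C \<subseteq> B" for C
  proof -
    have "L C 0 = (\<Prod>D\<in>Pow C. Lt D 0)" using tilde[OF that] P_0[of "Pow C" Lt] finC[OF that] by simp
    then have "(\<Prod>D\<in>Pow C. Lt D 0) \<noteq> 0" using const[OF that] by simp
    then show ?thesis using finC[OF that] by (simp add: prod_zero_iff)
  qed
  have split: "L C = mfps_mult (Lt C) (mfps_prod (Pow C - {C}) Lt)" if "C \<subseteq> B" for C
  proof -
    have "mfps_mult (Lt C) (mfps_prod (Pow C - {C}) Lt) = mfps_prod (insert C (Pow C - {C})) Lt"
      by (rule P_insert[symmetric]) (use finC[OF that] in auto)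
    also have "insert C (Pow C - {C}) = Pow C" by blast
    finally show ?thesis using tilde[OF that] by simp
  qed
  have Rnz: "mfps_prod I Lt 0 \<noteq> 0" if "I \<subseteq> Pow B" for I
  proof -
    have fI: "finite I" using that \<open>finite B\<close> finite_subset by blast
    have "(\<Prod>D\<in>I. Lt D 0) \<noteq> 0" using fI lt0 that by (auto simp: prod_zero_iff)
    then show ?thesis using P_0[OF fI, of Lt] by simp
  qed
  have supp: "\<forall>m. Lt C m \<noteq> 0 \<longrightarrow> Poly_Mapping.keys m \<subseteq> pair_vars C" if "C \<subseteq> B" for C
    using that
  proof (induction "card C" arbitrary: C rule: less_induct)
    case less
    define Q where "Q = (\<lambda>m :: 'a mono. Poly_Mapping.keys m \<subseteq> pair_vars C)"
    have hQ: "Q (p + q) \<longleftrightarrow> Q p \<and> Q q" for p q by (auto simp: Q_def keys_add_nat)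
    have Q0: "Q 0" by (simp add: Q_def)
    have fC: "finite C" using finC less by blast
    let ?R = "mfps_prod (Pow C - {C}) Lt"
    have fI: "finite (Pow C - {C})" using fC by simp
    have "filt Q ?R = mfps_prod (Pow C - {C}) (\<lambda>i. filt Q (Lt i))"
      by (rule filt_P[OF hQ Q0 fI])
    also have "\<dots> = ?R"
    proof (rule P_cong)
      fix D assume D: "D \<in> Pow C - {C}"
      then have "D \<subset> C" by auto
      then have "card D < card C" by (rule psubset_card_mono[OF fC])
      moreover have "D \<subseteq> B" using D less by auto
      ultimately have "\<forall>m. Lt D m \<noteq> 0 \<longrightarrow> Poly_Mapping.keys m \<subseteq> pair_vars D" by (rule less(1))
      moreover have "pair_vars D \<subseteq> pair_vars C" using D pair_vars_mono by blast
      ultimately show "filt Q (Lt D) = Lt D" unfolding filt_def Q_def by (intro ext) auto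
    qed
    finally have fR: "filt Q ?R = ?R" .
    have "filt Q (L C) = L C" using vars[OF less(2)] unfolding filt_def Q_def by (intro ext) auto
    have "mfps_mult (filt Q (Lt C)) ?R = mfps_mult (filt Q (Lt C)) (filt Q ?R)" using fR by simp
    also have "\<dots> = filt Q (mfps_mult (Lt C) ?R)" by (rule filt_mult[OF hQ, symmetric])
    also have "\<dots> = filt Q (L C)" using split[OF less(2)] by simp
    also have "\<dots> = mfps_mult (Lt C) ?R" using split[OF less(2)] \<open>filt Q (L C) = L C\<close> by simp
    finally have "mfps_mult (filt Q (Lt C)) ?R = mfps_mult (Lt C) ?R" .
    moreover have "?R 0 \<noteq> 0" by (rule Rnz) (use less(2) in auto)
    ultimately have eq: "filt Q (Lt C) = Lt C" by (rule cancel)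
    have "\<forall>m. Lt C m \<noteq> 0 \<longrightarrow> Q m"
    proof (intro allI impI)
      fix m assume "Lt C m \<noteq> 0"
      then have "filt Q (Lt C) m \<noteq> 0" using eq by simp
      then show "Q m" by (simp add: filt_def split: if_splits)
    qed
    then show ?case by (simp add: Q_def)
  qed
  have conn: "\<forall>m. m \<noteq> 0 \<and> Lt C m \<noteq> 0 \<longrightarrow> graph_connected C (Poly_Mapping.keys m)" if "C \<subseteq> B" for C
    using that
  proof (induction "card C" arbitrary: C rule: less_induct)
    case less
    have CB: "C \<subseteq> B" by (rule less(2))
    have fC: "finite C" using finC CB by blast
    show ?case
    proof (intro allI impI)
      fix m assume mm: "m \<noteq> 0 \<and> Lt C m \<noteq> 0"
      let ?r = "\<lambda>u v. u \<in> C \<and> v \<in> C \<and> u \<noteq> v \<and> {u, v} \<in> Poly_Mapping.keys m"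
      show "graph_connected C (Poly_Mapping.keys m)"
      proof (rule ccontr)
        assume "\<not> graph_connected C (Poly_Mapping.keys m)"
        then obtain x y where xy: "x \<in> C" "y \<in> C" "\<not> ?r\<^sup>*\<^sup>* x y"
          unfolding graph_connected_def by blast
        define X where "X = {v \<in> C. ?r\<^sup>*\<^sup>* x v}"
        define Y where "Y = C - X"
        have XY: "X \<union> Y = C" "X \<inter> Y = {}" "X \<subseteq> C" "Y \<subseteq> C" by (auto simp: X_def Y_def)
        have xX: "x \<in> X" using xy by (simp add: X_def)
        have yY: "y \<in> Y" using xy by (simp add: X_def Y_def)
        define Q where "Q = (\<lambda>m :: 'a mono. \<not> (\<exists>i\<in>X. \<exists>j\<in>Y. {i, j} \<in> Poly_Mapping.keys m))"
        have hQ: "Q (p + q) \<longleftrightarrow> Q p \<and> Q q" for p q by (auto simp: Q_def keys_add_nat)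
        have Q0: "Q 0" by (simp add: Q_def)
        have kf: "kill_cross X Y f = filt Q f" for f by (simp add: kill_cross_def filt_def Q_def fun_eq_iff)
        have Qm: "Q m"
          unfolding Q_def
        proof
          assume "\<exists>i\<in>X. \<exists>j\<in>Y. {i, j} \<in> Poly_Mapping.keys m"
          then obtain i j where ij: "i \<in> X" "j \<in> Y" "{i, j} \<in> Poly_Mapping.keys m" by blast
          then have r2: "?r i j" using XY by auto
          have r1: "?r\<^sup>*\<^sup>* x i" using ij by (simp add: X_def)
          have "?r\<^sup>*\<^sup>* x j" by (rule rtranclp.rtrancl_into_rtrancl[OF r1 r2])
          then have "j \<in> X" using ij XY by (auto simp: X_def)
          then show False using ij XY by blast
        qed
        have key: "\<exists>k. kill_cross X Y (Lt C) = cst k"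
        proof -
          define M where "M = {D \<in> Pow C. D \<noteq> C \<and> D \<inter> X \<noteq> {} \<and> D \<inter> Y \<noteq> {}}"
          define PY where "PY = Pow Y - {{}}"
          let ?k = "\<lambda>D. kill_cross X Y (Lt D)"
          have fM: "finite M" using fC by (simp add: M_def)
          have fPX: "finite (Pow X)" using fC XY finite_subset by blast
          have fPY: "finite PY" using fC XY finite_subset by (auto simp: PY_def)
          have decomp: "Pow C - {C} = M \<union> (Pow X \<union> PY)"
            using XY xX yY by (auto simp: M_def PY_def)
          have dis1: "M \<inter> (Pow X \<union> PY) = {}" using XY by (auto simp: M_def PY_def)
          have dis2: "Pow X \<inter> PY = {}" using XY by (auto simp: PY_def)
          have killM: "?k D = cst (Lt D 0)" if D: "D \<in> M" for D
          proof
            fix m'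
            have DC: "D \<subset> C" using D by (auto simp: M_def)
            then have "card D < card C" by (rule psubset_card_mono[OF fC])
            moreover have DB: "D \<subseteq> B" using DC CB by auto
            ultimately have IH: "\<forall>m. m \<noteq> 0 \<and> Lt D m \<noteq> 0 \<longrightarrow> graph_connected D (Poly_Mapping.keys m)"
              by (rule less(1))
            show "?k D m' = cst (Lt D 0) m'"
            proof (cases "m' = 0")
              case True then show ?thesis by (simp add: kill_cross_def cst_def)
            next
              case m'0: False
              show ?thesis
              proof (cases "Lt D m' = 0")
                case True then show ?thesis using m'0 by (simp add: kill_cross_def cst_def)
              next
                case False
                then have gc: "graph_connected D (Poly_Mapping.keys m')" using IH m'0 by blast
                obtain u where u: "u \<in> D" "u \<in> X" using D by (auto simp: M_def)
                obtain v where v: "v \<in> D" "v \<in> Y" using D by (auto simp: M_def)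
                let ?rD = "\<lambda>u v. u \<in> D \<and> v \<in> D \<and> u \<noteq> v \<and> {u, v} \<in> Poly_Mapping.keys m'"
                have "?rD\<^sup>*\<^sup>* u v" using gc u v unfolding graph_connected_def by blast
                moreover have "v \<notin> X" using v XY by blast
                ultimately obtain a b where ab: "?rD a b" "a \<in> X" "b \<notin> X"
                  using cross_step[of ?rD u v "\<lambda>w. w \<in> X"] u by blast
                then have "b \<in> Y" using DC XY by blast
                then have "\<exists>i\<in>X. \<exists>j\<in>Y. {i, j} \<in> Poly_Mapping.keys m'" using ab by blast
                then show ?thesis using m'0 by (simp add: kill_cross_def cst_def)
              qed
            qed
          qed
          have killXY: "?k D = Lt D" if D: "D \<subseteq> X \<or> D \<subseteq> Y" for D
          proof
            fix m'
            have DB: "D \<subseteq> B" using D XY CB by blast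
            show "?k D m' = Lt D m'"
            proof (cases "Lt D m' = 0")
              case True then show ?thesis by (simp add: kill_cross_def)
            next
              case False
              then have sub: "Poly_Mapping.keys m' \<subseteq> pair_vars D" using supp[OF DB] by blast
              have "\<not> (\<exists>i\<in>X. \<exists>j\<in>Y. {i, j} \<in> Poly_Mapping.keys m')"
              proof
                assume "\<exists>i\<in>X. \<exists>j\<in>Y. {i, j} \<in> Poly_Mapping.keys m'"
                then obtain i j where ij: "i \<in> X" "j \<in> Y" "{i, j} \<in> pair_vars D" using sub by blast
                then obtain a b where "{i, j} = {a, b}" "a \<in> D" "b \<in> D" unfolding pair_vars_def by blast
                then have "i \<in> D" "j \<in> D" by (metis insertCI insertE singletonD)+
                then show False using ij D XY by blast
              qed
              then show ?thesis by (simp add: kill_cross_def)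
            qed
          qed
          let ?R = "mfps_prod (Pow C - {C}) Lt"
          let ?QY = "mfps_prod PY Lt"
          define cM where "cM = (\<Prod>D\<in>M. Lt D 0)"
          let ?W = "mfps_mult (L X) ?QY"
          have fI: "finite (Pow C - {C})" using fC by simp
          have "kill_cross X Y (L C) = mfps_mult (?k C) (mfps_prod (Pow C - {C}) ?k)"
            using split[OF CB] kf filt_mult[OF hQ] filt_P[OF hQ Q0 fI] by simp
          also have "mfps_prod (Pow C - {C}) ?k =
              mfps_mult (mfps_prod M ?k) (mfps_mult (mfps_prod (Pow X) ?k) (mfps_prod PY ?k))"
            unfolding decomp using fM fPX fPY dis1 dis2 by (simp add: P_union)
          also have "mfps_prod M ?k = cst cM" unfolding cM_def by (rule P_cst[OF fM killM])
          also have "mfps_prod (Pow X) ?k = L X"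
            using tilde[of X] XY CB killXY by (auto intro!: P_cong)
          also have "mfps_prod PY ?k = ?QY"
            using killXY by (auto simp: PY_def intro!: P_cong)
          finally have lhs: "kill_cross X Y (L C) = (\<lambda>m. cM * mfps_mult (?k C) ?W m)"
            by (simp add: mult_cst_left mult_smult_right)
          have Lem: "Lt {} = cst (Lt {} 0)"
          proof
            fix m'
            show "Lt {} m' = cst (Lt {} 0) m'"
            proof (cases "m' = 0")
              case False
              then have "\<not> Poly_Mapping.keys m' \<subseteq> pair_vars {}" by (simp add: pair_vars_empty)
              then have "Lt {} m' = 0" using supp[of "{}"] by blast
              then show ?thesis using False by (simp add: cst_def)
            qed (simp add: cst_def)
          qed
          have "L Y = mfps_prod (insert {} PY) Lt" using tilde[of Y] XY CB
            by (simp add: PY_def insert_absorb)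
          also have "\<dots> = mfps_mult (Lt {}) ?QY" by (rule P_insert[OF fPY]) (simp add: PY_def)
          finally have LY: "L Y = (\<lambda>m. Lt {} 0 * ?QY m)" by (subst (asm) Lem) (simp add: mult_cst_left)
          have "kill_cross X Y (L C) = mfps_mult (L X) (L Y)" by (rule factor[OF CB XY(1,2)])
          also have "\<dots> = (\<lambda>m. Lt {} 0 * ?W m)" unfolding LY by (rule mult_smult_right)
          finally have eqW: "\<And>m. cM * mfps_mult (?k C) ?W m = Lt {} 0 * ?W m" using lhs by metis
          have cM0: "cM \<noteq> 0" unfolding cM_def using fM lt0 CB by (auto simp: prod_zero_iff M_def)
          have "mfps_mult (?k C) ?W = mfps_mult (cst (Lt {} 0 / cM)) ?W"
            unfolding mult_cst_left
          proof
            fix m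
            show "mfps_mult (?k C) ?W m = Lt {} 0 / cM * ?W m"
              using eqW[of m] cM0 by (simp add: field_simps)
          qed
          moreover have "?W 0 \<noteq> 0"
          proof -
            have "L X 0 \<noteq> 0" using const XY CB by blast
            moreover have "?QY 0 \<noteq> 0" by (rule Rnz) (use XY CB in \<open>auto simp: PY_def\<close>)
            ultimately show ?thesis by (simp add: mult_0)
          qed
          ultimately have "?k C = cst (Lt {} 0 / cM)" by (rule cancel)
          then show ?thesis by blast
        qed
        then obtain k where "kill_cross X Y (Lt C) = cst k" by blast
        then have "filt Q (Lt C) m = 0" using mm kf by (simp add: cst_def)
        then show False using Qm mm by (simp add: filt_def)
      qed
    qed
  qed
  show ?thesis using supp conn by blast
qed

end
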